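(* Let $\phi_1,\dots,\phi_k\in C^\infty(\mathbb R^n)$, $\widetilde J=(\phi_1,\dots,\phi_k)$, and assume $\{x:\wedge^kD\widetilde J(x)=0\}$ has Lebesgue measure zero. Let $Y$ be a complete vector field on $\mathbb R^n$ tangent to each level set $\widetilde\Sigma_\lambda=\widetilde J^{-1}(\lambda)$, and for regular $\lambda$ let $Y^\lambda=(i^\lambda_* )^{-1}\circ Y|_{\widetilde\Sigma_\lambda}$. Then quantization and reduction commute strongly on $J_Y(x,\xi)=\langle Y(x),\xi\rangle$: for every $\hbar\neq0$, $u\in C_c^\infty(\mathbb R^n)$ and every point $z$ with $\wedge^kD\widetilde J(z)\neq0$, writing $\lambda=\widetilde J(z)$, $$\rho(z)^{-1/2}\Big[-i\hbar\big(Y^{\lambda}+\tfrac12\mathrm{div}\,Y^{\lambda}\big)\big(\rho^{1/2}u|_{\widetilde\Sigma_{\lambda}}\big)\Big](z)=\Big[-i\hbar\big(Y+\tfrac12\mathrm{div}\,Y\big)u\Big](z),$$ that is, $\mathrm{Op}_\hbar(J_Y)u=T_x^*\Big[\int^\oplus_{\widetilde J(\mathbb R^n)}\mathrm{Op}^\lambda_\hbar(J_{Y^\lambda})\,d\lambda\Big]T_xu$.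
   Context: $\rho(x)=\|\wedge^kD\widetilde J(x)\|^{-1}$ (operator norm of the induced map $\wedge^k\mathbb R^n\to\wedge^k\mathbb R^k\cong\mathbb R$). $T_x$ is the unitary from $L^2(\mathbb R^n)$ to $\int^\oplus L^2(\widetilde\Sigma_\lambda,\eta_\lambda)\,d\lambda$ (over regular values in $\widetilde J(\mathbb R^n)$, $\eta_\lambda$ the Riemannian volume of $\widetilde\Sigma_\lambda$) given by $[T_xu(\lambda)](z)=\rho(z)^{1/2}u(z)$. $\mathrm{Op}_\hbar$ is the Weyl quantization on $\mathbb R^{2n}$, for which $\mathrm{Op}_\hbar(J_Y)=-i\hbar(Y+\frac12\mathrm{div}\,Y)$. For a Riemannian manifold $M$ and complete vector field $X$ on $M$, the Weyl–Landsman quantization of $J_X(m,\xi)=\langle X(m),\xi\rangle_m$ on $L^2(M)$ is $\mathrm{Op}^M_\hbar(J_X)=-i\hbar(X+\frac12\mathrm{div}\,X)$ (Riemannian divergence); $\mathrm{Op}^\lambda_\hbar$ denotes this for $M=\widetilde\Sigma_\lambda$. Under the identification of the reduced space of $\{\phi_j(x)\}$ at $\lambda$ with $T^*\widetilde\Sigma_\lambda$, the reduced function of $J_Y$ is $J_{Y^\lambda}$. *)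

theory Defs
  imports "HOL-Analysis.Analysis"
begin

text \<open>Iterated directional (Frechet) derivatives; C-infinity smoothness means that all
  of them exist (are Frechet differentiable) everywhere.\<close>
fun iter_dd :: "('a::real_normed_vector \<Rightarrow> 'b::real_normed_vector) \<Rightarrow> 'a list \<Rightarrow> 'a \<Rightarrow> 'b" where
  "iter_dd f [] = f"
| "iter_dd f (v # vs) = (\<lambda>x. frechet_derivative (iter_dd f vs) (at x) v)"

definition smooth :: "('a::real_normed_vector \<Rightarrow> 'b::real_normed_vector) \<Rightarrow> bool" where
  "smooth f \<longleftrightarrow> (\<forall>vs x. iter_dd f vs differentiable (at x))"

definition supp :: "('a::topological_space \<Rightarrow> 'b::zero) \<Rightarrow> 'a set" where
  "supp f = closure {x. f x \<noteq> 0}"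

definition grad_comp :: "(real^'n \<Rightarrow> real^'k) \<Rightarrow> 'k \<Rightarrow> real^'n \<Rightarrow> real^'n" where
  "grad_comp J j x = (\<chi> l. frechet_derivative J (at x) (axis l 1) $ j)"

text \<open>Norm of the covector wedge^k DJ(x) = d phi_1 /\ ... /\ d phi_k, i.e. the operator
  norm of wedge^k DJ(x) : wedge^k R^n -> R, computed as the square root of the Gram
  determinant of the gradients.\<close>
definition wedge_norm :: "(real^'n \<Rightarrow> real^'k) \<Rightarrow> real^'n \<Rightarrow> real" where
  "wedge_norm J x = sqrt (det (\<chi> i j. grad_comp J i x \<bullet> grad_comp J j x))"

definition rho :: "(real^'n \<Rightarrow> real^'k) \<Rightarrow> real^'n \<Rightarrow> real" where
  "rho J x = inverse (wedge_norm J x)"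

definition level_set :: "(real^'n \<Rightarrow> real^'k) \<Rightarrow> real^'k \<Rightarrow> (real^'n) set" where
  "level_set J lam = J -` {lam}"

definition tangent_space :: "(real^'n \<Rightarrow> real^'k) \<Rightarrow> real^'n \<Rightarrow> (real^'n) set" where
  "tangent_space J z = {v. frechet_derivative J (at z) v = 0}"

definition tangent_onb :: "(real^'n \<Rightarrow> real^'k) \<Rightarrow> real^'n \<Rightarrow> (real^'n) set" where
  "tangent_onb J z = (SOME B. B \<subseteq> tangent_space J z \<and> pairwise orthogonal B
      \<and> (\<forall>e\<in>B. norm e = 1) \<and> span B = tangent_space J z)"

definition div_euc :: "(real^'n \<Rightarrow> real^'n) \<Rightarrow> real^'n \<Rightarrow> real" where
  "div_euc Y z = (\<Sum>i\<in>Basis. frechet_derivative Y (at z) i \<bullet> i)"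

text \<open>Riemannian divergence of the restriction Y^lambda of a tangent vector field Y to the
  level set through the regular point z (induced metric): trace of the Levi-Civita
  covariant derivative, which for an embedded submanifold is the tangential projection
  of the ambient derivative (Gauss formula): sum over an orthonormal basis e of T_z Sigma
  of  e . (DY(z) e).\<close>
definition div_level :: "(real^'n \<Rightarrow> real^'k) \<Rightarrow> (real^'n \<Rightarrow> real^'n) \<Rightarrow> real^'n \<Rightarrow> real" where
  "div_level J Y z = (\<Sum>e\<in>tangent_onb J z. e \<bullet> (frechet_derivative Y (at z) e))"

text \<open>Phi is the (global) flow of Y: Y is complete.\<close>
definition is_flow :: "(real^'n \<Rightarrow> real^'n) \<Rightarrow> (real \<Rightarrow> real^'n \<Rightarrow> real^'n) \<Rightarrow> bool" where
  "is_flow Y Phi \<longleftrightarrow> (\<forall>x. Phi 0 x = x) \<and>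
     (\<forall>t x. ((\<lambda>s. Phi s x) has_vector_derivative Y (Phi t x)) (at t))"

text \<open>The vector field Y^lambda acting on a function f defined on the level set
  Sigma_lambda (lambda = J z), evaluated at z: derivative of f along the integral curve
  of Y through z, which stays in Sigma_lambda. Only values of f on Sigma_lambda are used.\<close>
definition vf_level :: "(real \<Rightarrow> real^'n \<Rightarrow> real^'n) \<Rightarrow> (real^'n \<Rightarrow> complex) \<Rightarrow> real^'n \<Rightarrow> complex" where
  "vf_level Phi f z = vector_derivative (\<lambda>t. f (Phi t z)) (at 0)"

end

theory Submission
  imports Defs
begin


lemma schwarz_half:
  fixes f :: "'a::real_normed_vector \<Rightarrow> real"
  assumes df: "\<And>x. (f has_derivative Df x) (at x)"
    and hv: "((\<lambda>x. Df x v) has_derivative Hv) (at z)"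
    and e: "e > 0"
  shows "\<exists>s0>0. \<forall>s. 0 < s \<and> s < s0 \<longrightarrow>
     \<bar>f (z + s *\<^sub>R v + s *\<^sub>R w) - f (z + s *\<^sub>R v) - f (z + s *\<^sub>R w) + f z - s\<^sup>2 * Hv w\<bar>
       \<le> 2 * e * s\<^sup>2 * (norm v + norm w)"
proof -
  from hv[unfolded has_derivative_at_alt] e obtain d where d: "d > 0"
    and dd: "\<And>y. norm (y - z) < d \<Longrightarrow> \<bar>Df y v - Df z v - Hv (y - z)\<bar> \<le> e * norm (y - z)"
    and blH: "bounded_linear Hv"
    by (metis real_norm_def)
  have linH: "linear Hv" using blH bounded_linear.linear by blast
  have linD: "\<And>x. linear (Df x)" using df has_derivative_linear by blast
  define C where "C = norm v + norm w"
  have C0: "C \<ge> 0" by (simp add: C_def)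
  show ?thesis
  proof (intro exI[of _ "d / (C + 1)"] conjI allI impI)
    show "d / (C + 1) > 0" using d C0 by simp
    fix s :: real assume s: "0 < s \<and> s < d / (C + 1)"
    hence s0: "s > 0" and sC: "s * C < d"
      using C0 d by (auto simp: field_simps)
    define \<psi> where "\<psi> t = f (z + t *\<^sub>R v + s *\<^sub>R w) - f (z + t *\<^sub>R v)" for t
    have der: "(\<psi> has_derivative (\<lambda>h. h * (Df (z + t *\<^sub>R v + s *\<^sub>R w) v - Df (z + t *\<^sub>R v) v))) (at t)" for t
    proof -
      have 1: "((\<lambda>t. f (z + t *\<^sub>R v + s *\<^sub>R w)) has_derivative (\<lambda>h. Df (z + t *\<^sub>R v + s *\<^sub>R w) (h *\<^sub>R v))) (at t)"
      proof -
        have "((\<lambda>t. z + t *\<^sub>R v + s *\<^sub>R w) has_derivative (\<lambda>h. h *\<^sub>R v)) (at t)"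
          by (auto intro!: derivative_eq_intros)
        from has_derivative_compose[OF this df] show ?thesis .
      qed
      have 2: "((\<lambda>t. f (z + t *\<^sub>R v)) has_derivative (\<lambda>h. Df (z + t *\<^sub>R v) (h *\<^sub>R v))) (at t)"
      proof -
        have "((\<lambda>t. z + t *\<^sub>R v) has_derivative (\<lambda>h. h *\<^sub>R v)) (at t)"
          by (auto intro!: derivative_eq_intros)
        from has_derivative_compose[OF this df] show ?thesis .
      qed
      have "(\<psi> has_derivative (\<lambda>h. Df (z + t *\<^sub>R v + s *\<^sub>R w) (h *\<^sub>R v) - Df (z + t *\<^sub>R v) (h *\<^sub>R v))) (at t)"
        unfolding \<psi>_def by (intro has_derivative_diff 1 2)
      moreover have "(\<lambda>h. Df (z + t *\<^sub>R v + s *\<^sub>R w) (h *\<^sub>R v) - Df (z + t *\<^sub>R v) (h *\<^sub>R v))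
         = (\<lambda>h. h * (Df (z + t *\<^sub>R v + s *\<^sub>R w) v - Df (z + t *\<^sub>R v) v))"
        using linD by (auto simp: linear_scale algebra_simps)
      ultimately show ?thesis by simp
    qed
    have cont: "continuous_on {0..s} \<psi>"
      using der by (meson continuous_at_imp_continuous_on has_derivative_continuous)
    obtain \<theta> where th: "0 < \<theta>" "\<theta> < s"
      and mv: "\<psi> s - \<psi> 0 = (s - 0) * (Df (z + \<theta> *\<^sub>R v + s *\<^sub>R w) v - Df (z + \<theta> *\<^sub>R v) v)"
      using mvt[OF s0 cont der] by metis
    have lhs: "f (z + s *\<^sub>R v + s *\<^sub>R w) - f (z + s *\<^sub>R v) - f (z + s *\<^sub>R w) + f z = \<psi> s - \<psi> 0"
      by (simp add: \<psi>_def)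
    define y1 where "y1 = \<theta> *\<^sub>R v + s *\<^sub>R w"
    define y2 where "y2 = \<theta> *\<^sub>R v"
    have n1: "norm y1 \<le> s * C"
    proof -
      have "norm y1 \<le> \<theta> * norm v + s * norm w" unfolding y1_def
        using th by (smt (verit) norm_scaleR norm_triangle_ineq s0 abs_of_pos)
      also have "\<dots> \<le> s * C" unfolding C_def using th by (simp add: algebra_simps mult_right_mono)
      finally show ?thesis .
    qed
    have n2: "norm y2 \<le> s * C"
      unfolding y2_def C_def using th by (simp add: algebra_simps mult_right_mono add_increasing2)
    have b1: "\<bar>Df (z + y1) v - Df z v - Hv y1\<bar> \<le> e * norm y1"
      using dd[of "z + y1"] n1 sC by simp
    have b2: "\<bar>Df (z + y2) v - Df z v - Hv y2\<bar> \<le> e * norm y2"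
      using dd[of "z + y2"] n2 sC by simp
    have Hy: "Hv y1 - Hv y2 = s * Hv w"
      unfolding y1_def y2_def using linH by (simp add: linear_add linear_scale)
    have "\<bar>(Df (z + y1) v - Df (z + y2) v) - s * Hv w\<bar> \<le> e * norm y1 + e * norm y2"
      using b1 b2 Hy by linarith
    also have "\<dots> \<le> 2 * e * (s * C)" using mult_left_mono[OF n1, of e] mult_left_mono[OF n2, of e] e by linarith
    finally have key: "\<bar>(Df (z + y1) v - Df (z + y2) v) - s * Hv w\<bar> \<le> 2 * e * (s * C)" .
    have "\<bar>\<psi> s - \<psi> 0 - s\<^sup>2 * Hv w\<bar> = s * \<bar>(Df (z + y1) v - Df (z + y2) v) - s * Hv w\<bar>"
    proof -
      have "\<psi> s - \<psi> 0 - s\<^sup>2 * Hv w = s * ((Df (z + y1) v - Df (z + y2) v) - s * Hv w)"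
        using mv unfolding y1_def y2_def by (simp add: add.assoc power2_eq_square algebra_simps)
      thus ?thesis using s0 by (simp add: abs_mult)
    qed
    also have "\<dots> \<le> s * (2 * e * (s * C))" using key s0 by (simp add: mult_left_mono)
    finally show "\<bar>f (z + s *\<^sub>R v + s *\<^sub>R w) - f (z + s *\<^sub>R v) - f (z + s *\<^sub>R w) + f z - s\<^sup>2 * Hv w\<bar>
       \<le> 2 * e * s\<^sup>2 * (norm v + norm w)"
      unfolding lhs C_def by (simp add: power2_eq_square algebra_simps)
  qed
qed


lemma schwarz:
  fixes f :: "'a::real_normed_vector \<Rightarrow> real"
  assumes df: "\<And>x. (f has_derivative Df x) (at x)"
    and hv: "((\<lambda>x. Df x v) has_derivative Hv) (at z)"
    and hw: "((\<lambda>x. Df x w) has_derivative Hw) (at z)"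
  shows "Hv w = Hw v"
proof -
  define C where "C = norm v + norm w"
  have C0: "C \<ge> 0" by (simp add: C_def)
  have bnd: "\<bar>Hv w - Hw v\<bar> \<le> 4 * e * C" if e: "e > 0" for e
  proof -
    obtain s1 where s1: "s1 > 0" and S1: "\<And>s. 0 < s \<Longrightarrow> s < s1 \<Longrightarrow>
     \<bar>f (z + s *\<^sub>R v + s *\<^sub>R w) - f (z + s *\<^sub>R v) - f (z + s *\<^sub>R w) + f z - s\<^sup>2 * Hv w\<bar>
       \<le> 2 * e * s\<^sup>2 * (norm v + norm w)"
      using schwarz_half[OF df hv e, of w] by blast
    obtain s2 where s2: "s2 > 0" and S2: "\<And>s. 0 < s \<Longrightarrow> s < s2 \<Longrightarrow>
     \<bar>f (z + s *\<^sub>R w + s *\<^sub>R v) - f (z + s *\<^sub>R w) - f (z + s *\<^sub>R v) + f z - s\<^sup>2 * Hw v\<bar>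
       \<le> 2 * e * s\<^sup>2 * (norm w + norm v)"
      using schwarz_half[OF df hw e, of v] by blast
    define s where "s = min s1 s2 / 2"
    have s: "0 < s" "s < s1" "s < s2" using s1 s2 by (auto simp: s_def)
    have eq: "z + s *\<^sub>R w + s *\<^sub>R v = z + s *\<^sub>R v + s *\<^sub>R w" by (simp add: algebra_simps)
    have "\<bar>s\<^sup>2 * Hv w - s\<^sup>2 * Hw v\<bar> \<le> 2 * e * s\<^sup>2 * C + 2 * e * s\<^sup>2 * C"
    proof -
      define D where "D = f (z + s *\<^sub>R v + s *\<^sub>R w) - f (z + s *\<^sub>R v) - f (z + s *\<^sub>R w) + f z"
      have A: "\<bar>D - s\<^sup>2 * Hv w\<bar> \<le> 2 * e * s\<^sup>2 * C"
        using S1[OF s(1,2)] unfolding C_def D_def .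
      have "norm w + norm v = C" by (simp add: C_def)
      moreover have "f (z + s *\<^sub>R w + s *\<^sub>R v) - f (z + s *\<^sub>R w) - f (z + s *\<^sub>R v) + f z = D"
        unfolding D_def eq by simp
      ultimately have B: "\<bar>D - s\<^sup>2 * Hw v\<bar> \<le> 2 * e * s\<^sup>2 * C"
        using S2[OF s(1,3)] by metis
      show ?thesis using A B by linarith
    qed
    hence "s\<^sup>2 * \<bar>Hv w - Hw v\<bar> \<le> s\<^sup>2 * (4 * e * C)"
      by (simp add: abs_mult flip: right_diff_distrib) (simp add: algebra_simps)
    thus ?thesis using s(1) by simp
  qed
  show ?thesis
  proof (rule ccontr)
    assume ne: "Hv w \<noteq> Hw v"
    define e where "e = \<bar>Hv w - Hw v\<bar> / (8 * (C + 1))"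
    have e0: "e > 0" using ne C0 by (simp add: e_def)
    have "\<bar>Hv w - Hw v\<bar> \<le> 4 * e * C" by (rule bnd[OF e0])
    also have "\<dots> < \<bar>Hv w - Hw v\<bar>" using ne C0 unfolding e_def
      by (simp add: field_simps) (smt (verit) mult_nonneg_nonneg abs_ge_zero)
    finally show False by simp
  qed
qed



lemma det_has_derivative:
  fixes Gx :: "'a::real_normed_vector \<Rightarrow> real^'k^'k"
  assumes d: "\<And>i j. ((\<lambda>x. Gx x $ i $ j) has_derivative Dg i j) (at z)"
  shows "((\<lambda>x. det (Gx x)) has_derivative
     (\<lambda>w. \<Sum>i\<in>UNIV. det (\<chi> a b. if a = i then Dg a b w else Gx z $ a $ b))) (at z)"
proof -
  have "((\<lambda>x. \<Sum>p\<in>{p. p permutes (UNIV::'k set)}. of_int (sign p) * (\<Prod>i\<in>UNIV. Gx x $ i $ p i)) has_derivative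
     (\<lambda>w. \<Sum>p\<in>{p. p permutes (UNIV::'k set)}. of_int (sign p) *
        (\<Sum>i\<in>UNIV. Dg i (p i) w * (\<Prod>a\<in>UNIV - {i}. Gx z $ a $ p a)))) (at z)"
    by (intro has_derivative_sum has_derivative_mult_right has_derivative_prod d)
  moreover have "(\<lambda>w. \<Sum>p\<in>{p. p permutes (UNIV::'k set)}. of_int (sign p) *
        (\<Sum>i\<in>UNIV. Dg i (p i) w * (\<Prod>a\<in>UNIV - {i}. Gx z $ a $ p a)))
     = (\<lambda>w. \<Sum>i\<in>UNIV. det (\<chi> a b. if a = i then Dg a b w else Gx z $ a $ b))"
  proof
    fix w
    have "det (\<chi> a b. if a = i then Dg a b w else Gx z $ a $ b) =
      (\<Sum>p\<in>{p. p permutes (UNIV::'k set)}. of_int (sign p) * (Dg i (p i) w * (\<Prod>a\<in>UNIV - {i}. Gx z $ a $ p a)))"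
      for i
    proof -
      have "(\<Prod>a\<in>UNIV. (if a = i then Dg a (p a) w else Gx z $ a $ p a)) =
         Dg i (p i) w * (\<Prod>a\<in>UNIV - {i}. Gx z $ a $ p a)" for p
        by (subst prod.remove[of _ i]) (auto intro!: prod.cong)
      thus ?thesis unfolding det_def by simp
    qed
    thus "(\<Sum>p\<in>{p. p permutes (UNIV::'k set)}. of_int (sign p) *
        (\<Sum>i\<in>UNIV. Dg i (p i) w * (\<Prod>a\<in>UNIV - {i}. Gx z $ a $ p a)))
     = (\<Sum>i\<in>UNIV. det (\<chi> a b. if a = i then Dg a b w else Gx z $ a $ b))"
      by (simp add: sum_distrib_left) (rule sum.swap)
  qed
  ultimately show ?thesis unfolding det_def by simp
qed

lemma det_row_replace_sum:
  fixes G C :: "real^'k^'k"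
  shows "(\<Sum>i\<in>UNIV. det (\<chi> a b. if a = i then (C ** G)$a$b else G$a$b)) = trace C * det G"
proof -
  have "det (\<chi> a b. if a = i then (C ** G)$a$b else G$a$b) = C$i$i * det G" for i
  proof -
    have "(\<chi> a b. if a = i then (C ** G)$a$b else G$a$b) =
      (\<chi> a. if a = i then sum (\<lambda>c. (row i C)$c *s row c G) (UNIV::'k set) else row a G)"
      by (auto simp: vec_eq_iff row_def matrix_matrix_mult_def)
    thus ?thesis using cramer_lemma_transpose[of i "row i C" G] by (simp add: row_def)
  qed
  thus ?thesis by (simp add: trace_def sum_distrib_right)
qed



lemma sum_Basis_vec_real: "(\<Sum>b\<in>(Basis::(real^'n) set). F b) = (\<Sum>i\<in>UNIV. F (axis i 1))"
proof -
  have B: "(Basis::(real^'n) set) = range (\<lambda>i. axis i (1::real))" by (auto simp: Basis_vec_def)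
  have "inj (\<lambda>i::'n. axis i (1::real))" by (auto simp: inj_def axis_eq_axis)
  thus ?thesis unfolding B by (simp add: sum.reindex)
qed

lemma trace_via_basis:
  fixes A :: "real^'n^'n"
  shows "trace A = (\<Sum>b\<in>Basis. b \<bullet> (A *v b))"
  unfolding sum_Basis_vec_real trace_def
  by (simp add: inner_axis' matrix_vector_mult_basis column_def)

lemma orthonormal_expand:
  fixes B :: "'a::euclidean_space set"
  assumes fin: "finite B" and orth: "pairwise orthogonal B" and nrm: "\<And>e. e \<in> B \<Longrightarrow> norm e = 1"
    and x: "x \<in> span B"
  shows "(\<Sum>e\<in>B. (e \<bullet> x) *\<^sub>R e) = x"
proof -
  obtain c where xc: "x = (\<Sum>v\<in>B. c v *\<^sub>R v)" using x unfolding span_finite[OF fin] by auto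
  have "e \<bullet> x = c e" if e: "e \<in> B" for e
  proof -
    have "e \<bullet> x = (\<Sum>v\<in>B. c v * (e \<bullet> v))" unfolding xc by (simp add: inner_sum_right)
    also have "\<dots> = c e * (e \<bullet> e)"
      using orth e unfolding pairwise_def orthogonal_def
      by (subst sum.remove[OF fin e]) (auto intro!: sum.neutral, metis)
    also have "e \<bullet> e = 1" using nrm[OF e] by (simp add: dot_square_norm)
    finally show ?thesis by simp
  qed
  thus ?thesis using xc by simp
qed

lemma div_level_lemma:
  fixes M :: "real^'n^'k" and L :: "real^'n \<Rightarrow> real^'n" and B :: "(real^'n) set"
    and Gi :: "real^'k^'k"
  assumes lin: "linear L"
    and BT: "B \<subseteq> {v. M *v v = 0}" and orth: "pairwise orthogonal B"
    and nrm: "\<forall>e\<in>B. norm e = 1" and spanB: "span B = {v. M *v v = 0}"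
    and inv: "(M ** transpose M) ** Gi = mat 1"
  shows "(\<Sum>e\<in>B. e \<bullet> L e) = (\<Sum>b\<in>Basis. L b \<bullet> b) - trace (matrix L ** (transpose M ** Gi ** M))"
proof -
  define P where "P = transpose M ** Gi ** M"
  define Q where "Q x = (\<Sum>e\<in>B. (e \<bullet> x) *\<^sub>R e)" for x
  have fin: "finite B" using pairwise_orthogonal_imp_finite[OF orth] .
  have step2: "(\<Sum>e\<in>B. e \<bullet> L e) = (\<Sum>b\<in>Basis. b \<bullet> L (Q b))"
  proof -
    have "(\<Sum>b\<in>Basis. b \<bullet> L (Q b)) = (\<Sum>b\<in>Basis. \<Sum>e\<in>B. (e \<bullet> b) * (L e \<bullet> b))"
      unfolding Q_def using lin
      by (simp add: linear_sum linear_scale inner_sum_right inner_commute)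
    also have "\<dots> = (\<Sum>e\<in>B. \<Sum>b\<in>Basis. (e \<bullet> b) * (L e \<bullet> b))" by (rule sum.swap)
    also have "\<dots> = (\<Sum>e\<in>B. e \<bullet> L e)" by (simp add: euclidean_inner[symmetric])
    finally show ?thesis by simp
  qed
  have Qb: "Q b = b - P *v b" for b
  proof -
    have inT: "b - P *v b \<in> span B"
    proof -
      have "M *v (P *v b) = ((M ** transpose M) ** Gi) *v (M *v b)"
        unfolding P_def by (simp add: matrix_vector_mul_assoc matrix_mul_assoc)
      hence "M *v (b - P *v b) = 0" using inv by (simp add: matrix_vector_mult_diff_distrib)
      thus ?thesis using spanB by simp
    qed
    have perp: "e \<bullet> (P *v b) = 0" if e: "e \<in> B" for e
    proof -
      have "e \<bullet> (P *v b) = e \<bullet> (transpose M *v ((Gi ** M) *v b))"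
        unfolding P_def by (simp add: matrix_vector_mul_assoc matrix_mul_assoc)
      also have "\<dots> = ((Gi ** M) *v b) \<bullet> (M *v e)"
        by (metis transpose_matrix_vector dot_lmul_matrix inner_commute)
      also have "M *v e = 0" using e BT by auto
      finally show ?thesis by simp
    qed
    have "Q b = Q (b - P *v b) + Q (P *v b)"
      unfolding Q_def by (simp add: inner_diff_right scaleR_diff_left sum_subtractf)
    also have "Q (b - P *v b) = b - P *v b"
      unfolding Q_def by (rule orthonormal_expand[OF fin orth _ inT]) (use nrm in auto)
    also have "Q (P *v b) = 0" unfolding Q_def using perp by simp
    finally show ?thesis by simp
  qed
  have "(\<Sum>e\<in>B. e \<bullet> L e) = (\<Sum>b\<in>Basis. b \<bullet> L b - b \<bullet> L (P *v b))"
    unfolding step2 Qb using lin by (simp add: linear_diff inner_diff_right)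
  also have "\<dots> = (\<Sum>b\<in>Basis. L b \<bullet> b) - (\<Sum>b\<in>Basis. b \<bullet> ((matrix L ** P) *v b))"
  proof -
    have "L (P *v b) = (matrix L ** P) *v b" for b
      using matrix_vector_mul(2)[OF lin] by (metis matrix_vector_mul_assoc)
    thus ?thesis by (simp add: sum_subtractf inner_commute)
  qed
  also have "(\<Sum>b\<in>Basis. b \<bullet> ((matrix L ** P) *v b)) = trace (matrix L ** P)"
    by (rule trace_via_basis[symmetric])
  finally show ?thesis unfolding P_def .
qed



lemma sqrt_abs_mult: "sqrt x * sqrt \<bar>x\<bar> = (x::real)"
  by (cases "x \<ge> 0") (auto simp: real_sqrt_minus real_sqrt_mult[symmetric] abs_if)

lemma DERIV_sqrt_nz: "x \<noteq> 0 \<Longrightarrow> DERIV sqrt x :> inverse (sqrt \<bar>x\<bar>) / 2"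
  by (rule DERIV_real_sqrt_generic) (auto simp: real_sqrt_minus)

theorem mainTheorem12:
  fixes J :: "real^'n \<Rightarrow> real^'k" and Y :: "real^'n \<Rightarrow> real^'n"
    and Phi :: "real \<Rightarrow> real^'n \<Rightarrow> real^'n"
    and hbar :: real and u :: "real^'n \<Rightarrow> complex" and z :: "real^'n"
  assumes J_smooth: "smooth J"
    and crit_null: "{x. wedge_norm J x = 0} \<in> null_sets lborel"
    and Y_smooth: "smooth Y"
    and Y_complete: "is_flow Y Phi"
    and Y_tangent: "\<forall>x. frechet_derivative J (at x) (Y x) = 0"
    and hbar: "hbar \<noteq> 0"
    and u_smooth: "smooth u" and u_supp: "compact (supp u)"
    and z_reg: "wedge_norm J z \<noteq> 0"
  shows "complex_of_real (inverse (sqrt (rho J z))) *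
           (- \<i> * complex_of_real hbar *
             (vf_level Phi (\<lambda>x. complex_of_real (sqrt (rho J x)) * u x) z
              + complex_of_real (div_level J Y z / 2)
                * (complex_of_real (sqrt (rho J z)) * u z)))
       = - \<i> * complex_of_real hbar *
           (frechet_derivative u (at z) (Y z) + complex_of_real (div_euc Y z / 2) * u z)"
proof -
  define DJ where "DJ x = frechet_derivative J (at x)" for x
  have hasJ: "(J has_derivative DJ x) (at x)" for x
    using J_smooth unfolding smooth_def DJ_def
    by (metis iter_dd.simps(1) frechet_derivative_works)
  have linDJ: "linear (DJ x)" for x using hasJ has_derivative_linear by blast
  define H where "H v = frechet_derivative (\<lambda>x. DJ x v) (at z)" for v
  have hasDJv: "((\<lambda>x. DJ x v) has_derivative frechet_derivative (\<lambda>x. DJ x v) (at y)) (at y)" for v y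
  proof -
    have "iter_dd J [v] differentiable (at y)" using J_smooth unfolding smooth_def by blast
    hence "(\<lambda>x. DJ x v) differentiable (at y)" by (simp add: DJ_def)
    thus ?thesis using frechet_derivative_works by blast
  qed
  have hasH: "((\<lambda>x. DJ x v) has_derivative H v) (at z)" for v
    unfolding H_def by (rule hasDJv)
  have linH: "linear (H v)" for v using hasH has_derivative_linear by blast
  have symH: "H v w = H w v" for v w
  proof (subst vec_eq_iff, intro allI)
    fix j
    have d1: "((\<lambda>x. J x $ j) has_derivative (\<lambda>h. DJ x h $ j)) (at x)" for x
      using bounded_linear.has_derivative[OF bounded_linear_vec_nth hasJ] .
    have d2: "((\<lambda>x. DJ x v $ j) has_derivative (\<lambda>h. H v h $ j)) (at z)" for v
      using bounded_linear.has_derivative[OF bounded_linear_vec_nth hasH] .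
    show "H v w $ j = H w v $ j"
      using schwarz[OF d1 d2 d2] .
  qed
  define DY where "DY = frechet_derivative Y (at z)"
  have hasY: "(Y has_derivative DY) (at z)"
    using Y_smooth unfolding smooth_def DY_def
    by (metis iter_dd.simps(1) frechet_derivative_works)
  have linDY: "linear DY" using hasY has_derivative_linear by blast
  have KEY: "H w (Y z) = - DJ z (DY w)" for w
  proof -
    have repr: "DJ x (Y x) = (\<Sum>b\<in>Basis. (Y x \<bullet> b) *\<^sub>R DJ x b)" for x
    proof -
      have "DJ x (Y x) = DJ x (\<Sum>b\<in>Basis. (Y x \<bullet> b) *\<^sub>R b)" by (simp add: euclidean_representation)
      also have "\<dots> = (\<Sum>b\<in>Basis. (Y x \<bullet> b) *\<^sub>R DJ x b)"
        using linDJ by (simp add: linear_sum linear_scale)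
      finally show ?thesis .
    qed
    have d: "((\<lambda>x. \<Sum>b\<in>Basis. (Y x \<bullet> b) *\<^sub>R DJ x b) has_derivative
        (\<lambda>w. \<Sum>b\<in>Basis. (Y z \<bullet> b) *\<^sub>R H b w + (DY w \<bullet> b) *\<^sub>R DJ z b)) (at z)"
      by (intro has_derivative_sum has_derivative_scaleR has_derivative_inner_left hasY hasH)
    have zero: "(\<lambda>x. \<Sum>b\<in>Basis. (Y x \<bullet> b) *\<^sub>R DJ x b) = (\<lambda>x. 0)"
      using Y_tangent repr by (simp add: DJ_def)
    have "(\<lambda>w. \<Sum>b\<in>Basis. (Y z \<bullet> b) *\<^sub>R H b w + (DY w \<bullet> b) *\<^sub>R DJ z b) = (\<lambda>w. 0)"
      by (rule has_derivative_unique[OF d[unfolded zero]]) simp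
    hence "(\<Sum>b\<in>Basis. (Y z \<bullet> b) *\<^sub>R H b w + (DY w \<bullet> b) *\<^sub>R DJ z b) = 0" by metis
    moreover have "(\<Sum>b\<in>Basis. (Y z \<bullet> b) *\<^sub>R H b w) = H w (Y z)"
    proof -
      have "(\<Sum>b\<in>Basis. (Y z \<bullet> b) *\<^sub>R H b w) = (\<Sum>b\<in>Basis. (Y z \<bullet> b) *\<^sub>R H w b)"
        by (simp add: symH)
      also have "\<dots> = H w (\<Sum>b\<in>Basis. (Y z \<bullet> b) *\<^sub>R b)"
        using linH by (simp add: linear_sum linear_scale)
      finally show ?thesis by (simp add: euclidean_representation)
    qed
    moreover have "(\<Sum>b\<in>Basis. (DY w \<bullet> b) *\<^sub>R DJ z b) = DJ z (DY w)"
    proof -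
      have "(\<Sum>b\<in>Basis. (DY w \<bullet> b) *\<^sub>R DJ z b) = DJ z (\<Sum>b\<in>Basis. (DY w \<bullet> b) *\<^sub>R b)"
        using linDJ by (simp add: linear_sum linear_scale)
      thus ?thesis by (simp add: euclidean_representation)
    qed
    ultimately show ?thesis by (simp add: sum.distrib eq_neg_iff_add_eq_0)
  qed
  define M where "M = matrix (DJ z)"
  define Lm where "Lm = matrix DY"
  have Mv: "DJ z v = M *v v" for v unfolding M_def using matrix_vector_mul(2)[OF linDJ] by metis
  have Lv: "DY v = Lm *v v" for v unfolding Lm_def using matrix_vector_mul(2)[OF linDY] by metis
  have Ment: "M $ i $ l = DJ z (axis l 1) $ i" for i l
    unfolding M_def matrix_def by simp
  define Gx where "Gx x = (\<chi> i j. grad_comp J i x \<bullet> grad_comp J j x)" for x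
  have Gent: "Gx x $ i $ j = (\<Sum>l\<in>UNIV. DJ x (axis l 1) $ i * DJ x (axis l 1) $ j)" for x i j
    by (simp add: Gx_def grad_comp_def inner_vec_def DJ_def)
  define G where "G = Gx z"
  have GM: "G = M ** transpose M"
    by (simp add: vec_eq_iff G_def Gent Ment matrix_matrix_mult_def transpose_def)
  define Dg where "Dg i j w = (\<Sum>l\<in>UNIV. H (axis l 1) w $ i * DJ z (axis l 1) $ j
       + DJ z (axis l 1) $ i * H (axis l 1) w $ j)" for i j w
  have hasG: "((\<lambda>x. Gx x $ i $ j) has_derivative Dg i j) (at z)" for i j
  proof -
    have c: "((\<lambda>x. DJ x (axis l 1) $ i) has_derivative (\<lambda>w. H (axis l 1) w $ i)) (at z)" for l i
      using bounded_linear.has_derivative[OF bounded_linear_vec_nth hasH] .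
    show ?thesis unfolding Gent Dg_def
      by (intro has_derivative_sum has_derivative_eq_rhs[OF has_derivative_mult[OF c c]])
         (auto simp: fun_eq_iff add.commute)
  qed
  have hasDet: "((\<lambda>x. det (Gx x)) has_derivative
     (\<lambda>w. \<Sum>i\<in>UNIV. det (\<chi> a b. if a = i then Dg a b w else G $ a $ b))) (at z)"
    unfolding G_def by (rule det_has_derivative[OF hasG])
  define Km where "Km = M ** Lm"
  define A where "A = Km ** transpose M"
  define Gd where "Gd = - (A + transpose A)"
  have Aent: "A $ a $ b = (\<Sum>l\<in>UNIV. Km $ a $ l * M $ b $ l)" for a b
    by (simp add: A_def matrix_matrix_mult_def transpose_def)
  have HY: "H (axis l 1) (Y z) $ i = - Km $ i $ l" for l i
  proof -
    have "H (axis l 1) (Y z) = - ((M ** Lm) *v axis l 1)"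
      using KEY[of "axis l 1"] symH by (simp add: Mv Lv matrix_vector_mul_assoc)
    thus ?thesis by (simp add: matrix_vector_mult_basis column_def Km_def)
  qed
  have DgY: "Dg a b (Y z) = Gd $ a $ b" for a b
  proof -
    have "Dg a b (Y z) = (\<Sum>l\<in>UNIV. - (Km $ a $ l * M $ b $ l) - Km $ b $ l * M $ a $ l)"
      unfolding Dg_def HY Ment[symmetric] by (simp add: mult.commute)
    also have "\<dots> = - (\<Sum>l\<in>UNIV. Km $ a $ l * M $ b $ l) - (\<Sum>l\<in>UNIV. Km $ b $ l * M $ a $ l)"
      by (simp add: sum_subtractf sum_negf)
    also have "\<dots> = Gd $ a $ b" by (simp add: Gd_def Aent transpose_def)
    finally show ?thesis .
  qed
  have a0: "det G \<noteq> 0" using z_reg by (simp add: wedge_norm_def G_def Gx_def)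
  obtain Gi where Gi1: "G ** Gi = mat 1" and Gi2: "Gi ** G = mat 1"
    using a0 unfolding invertible_det_nz[symmetric] invertible_def by blast
  have Gsym: "transpose G = G" unfolding GM by (simp add: matrix_transpose_mul)
  have Gisym: "transpose Gi = Gi"
  proof -
    have "transpose Gi ** G = mat 1"
      using arg_cong[OF Gi1, of transpose] Gsym by (simp add: matrix_transpose_mul transpose_mat)
    hence "transpose Gi = transpose Gi ** (G ** Gi)" using Gi1 by simp
    also have "\<dots> = Gi" using \<open>transpose Gi ** G = mat 1\<close> by (simp add: matrix_mul_assoc)
    finally show ?thesis .
  qed
  define P where "P = transpose M ** Gi ** M"
  define tP where "tP = trace (Lm ** P)"
  have trT: "trace (transpose X) = trace X" for X :: "real^'k^'k"
    by (simp add: trace_def transpose_def)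
  have trA: "trace (A ** Gi) = tP"
  proof -
    have "trace (A ** Gi) = trace (M ** (Lm ** transpose M ** Gi))"
      by (simp add: A_def Km_def matrix_mul_assoc)
    also have "\<dots> = trace ((Lm ** transpose M ** Gi) ** M)" by (rule trace_mul_sym)
    also have "\<dots> = tP" by (simp add: tP_def P_def matrix_mul_assoc)
    finally show ?thesis .
  qed
  have trAt: "trace (transpose A ** Gi) = tP"
  proof -
    have "trace (transpose A ** Gi) = trace (transpose (transpose Gi ** A))"
      by (simp add: matrix_transpose_mul)
    also have "\<dots> = trace (Gi ** A)" by (simp add: trT Gisym)
    also have "\<dots> = trace (A ** Gi)" by (rule trace_mul_sym)
    finally show ?thesis using trA by simp
  qed
  have trGd: "trace (Gd ** Gi) = - 2 * tP"
  proof -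
    have e: "Gd ** Gi = - (A ** Gi) - (transpose A ** Gi)"
      by (simp add: vec_eq_iff Gd_def matrix_matrix_mult_def sum_negf[symmetric]
          sum_subtractf[symmetric] algebra_simps)
    have n: "trace (- X) = - trace X" for X :: "real^'k^'k"
      by (simp add: trace_def sum_negf)
    show ?thesis unfolding e trace_sub n trA trAt by simp
  qed
  have dDetY: "(\<Sum>i\<in>UNIV. det (\<chi> a b. if a = i then Dg a b (Y z) else G $ a $ b)) = - 2 * tP * det G"
  proof -
    have GdG: "Gd = (Gd ** Gi) ** G" by (simp add: matrix_mul_assoc[symmetric] Gi2)
    have "(\<Sum>i\<in>UNIV. det (\<chi> a b. if a = i then Dg a b (Y z) else G $ a $ b))
        = (\<Sum>i\<in>UNIV. det (\<chi> a b. if a = i then ((Gd ** Gi) ** G) $ a $ b else G $ a $ b))"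
      unfolding DgY by (simp only: GdG[symmetric])
    also have "\<dots> = trace (Gd ** Gi) * det G" by (rule det_row_replace_sum)
    finally show ?thesis using trGd by simp
  qed
  have TS: "tangent_space J z = {v. M *v v = 0}"
    by (simp add: tangent_space_def Mv[symmetric] DJ_def)
  have sub: "subspace {v. DJ z v = 0}"
    using linDJ[of z] by (auto simp: subspace_def linear_0 linear_add linear_scale)
  define B where "B = tangent_onb J z"
  have "\<exists>B. B \<subseteq> tangent_space J z \<and> pairwise orthogonal B
      \<and> (\<forall>e\<in>B. norm e = 1) \<and> span B = tangent_space J z"
    using orthonormal_basis_subspace[OF sub] unfolding tangent_space_def DJ_def by metis
  hence Bprops: "B \<subseteq> tangent_space J z \<and> pairwise orthogonal B
      \<and> (\<forall>e\<in>B. norm e = 1) \<and> span B = tangent_space J z"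
    unfolding B_def tangent_onb_def by (rule someI_ex)
  have divl: "div_level J Y z = div_euc Y z - tP"
  proof -
    have "div_level J Y z = (\<Sum>e\<in>B. e \<bullet> DY e)"
      by (simp add: div_level_def B_def DY_def)
    also have "\<dots> = (\<Sum>b\<in>Basis. DY b \<bullet> b) - trace (matrix DY ** (transpose M ** Gi ** M))"
      by (rule div_level_lemma[OF linDY]) (use Bprops TS Gi1 GM in auto)
    finally show ?thesis by (simp add: div_euc_def DY_def tP_def P_def Lm_def)
  qed
  define a where "a = det G"
  define sa where "sa = sqrt a"
  define r where "r = inverse sa"
  define q where "q = sqrt r"
  have a0': "a \<noteq> 0" using a0 by (simp add: a_def)
  have sa0: "sa \<noteq> 0" using a0' by (simp add: sa_def)
  have r0: "r \<noteq> 0" using sa0 by (simp add: r_def)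
  have q0: "q \<noteq> 0" using r0 by (simp add: q_def)
  have rho_eq: "sqrt (rho J x) = sqrt (inverse (sqrt (det (Gx x))))" for x
    by (simp add: rho_def wedge_norm_def Gx_def)
  have qz: "sqrt (rho J z) = q" by (simp add: rho_eq q_def r_def sa_def a_def G_def)
  define g' where "g' = inverse (sqrt \<bar>r\<bar>) / 2 * (- (inverse sa ^ Suc (Suc 0))) * (inverse (sqrt \<bar>a\<bar>) / 2)"
  have dg: "DERIV (\<lambda>s. sqrt (inverse (sqrt s))) a :> g'"
  proof -
    have di: "DERIV inverse (sqrt a) :> - (inverse (sqrt a) ^ Suc (Suc 0))"
      using DERIV_inverse[of "sqrt a"] sa0 by (simp add: sa_def)
    have dd: "DERIV (\<lambda>s. inverse (sqrt s)) a :> - (inverse (sqrt a) ^ Suc (Suc 0)) * (inverse (sqrt \<bar>a\<bar>) / 2)"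
      using DERIV_chain2[OF di DERIV_sqrt_nz[OF a0']] .
    have ds: "DERIV sqrt (inverse (sqrt a)) :> inverse (sqrt \<bar>r\<bar>) / 2"
      using DERIV_sqrt_nz[OF r0] by (simp add: r_def sa_def)
    show ?thesis using DERIV_chain2[where g="\<lambda>s. inverse (sqrt s)" and x=a, OF ds dd]
      by (simp add: g'_def r_def sa_def mult.assoc)
  qed
  have g'eq: "g' = - q / (4 * a)"
  proof -
    have e1: "sa * sqrt \<bar>a\<bar> = a" unfolding sa_def by (rule sqrt_abs_mult)
    have e2: "q * sqrt \<bar>r\<bar> = r" unfolding q_def by (rule sqrt_abs_mult)
    have e3: "r * sa = 1" using sa0 by (simp add: r_def)
    have n1: "sqrt \<bar>a\<bar> \<noteq> 0" and n2: "sqrt \<bar>r\<bar> \<noteq> 0" using a0' r0 by auto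
    have "g' * (4 * a) = - q"
    proof -
      have "g' * (4 * a) = - (r * r * (sa * sqrt \<bar>a\<bar>)) / (sqrt \<bar>r\<bar> * sqrt \<bar>a\<bar>)"
        unfolding g'_def e1 r_def by (simp add: field_simps power2_eq_square)
      also have "\<dots> = - r / sqrt \<bar>r\<bar>" using e3 n1 by (simp add: field_simps)
      also have "\<dots> = - q" using e2 n2 by (simp add: field_simps)
      finally show ?thesis .
    qed
    thus ?thesis using a0' by (simp add: field_simps)
  qed
  define dD where "dD w = (\<Sum>i\<in>UNIV. det (\<chi> a b. if a = i then Dg a b w else G $ a $ b))" for w
  have hasf: "((\<lambda>x. sqrt (rho J x)) has_derivative (\<lambda>w. dD w * g')) (at z)"
    unfolding rho_eq
    using DERIV_compose_FDERIV[where f="\<lambda>s. sqrt (inverse (sqrt s))" and g="\<lambda>x. det (Gx x)", OF _ hasDet[folded dD_def]]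
      dg by (simp add: a_def G_def)
  have dDY: "dD (Y z) * g' = tP * q / 2"
    unfolding dD_def dDetY g'eq using a0' by (simp add: a_def field_simps)
  define Du where "Du = frechet_derivative u (at z)"
  have hasu: "(u has_derivative Du) (at z)"
    using u_smooth unfolding smooth_def Du_def
    by (metis iter_dd.simps(1) frechet_derivative_works)
  define gfun where "gfun x = complex_of_real (sqrt (rho J x)) * u x" for x
  define Dgf where "Dgf w = complex_of_real (sqrt (rho J z)) * Du w + complex_of_real (dD w * g') * u z" for w
  have hasg: "(gfun has_derivative Dgf) (at z)"
    unfolding gfun_def Dgf_def[abs_def]
    by (rule has_derivative_eq_rhs[OF has_derivative_mult[OF has_derivative_of_real[OF hasf] hasu]]) auto
  have linDgf: "linear Dgf" using hasg has_derivative_linear by blast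
  have curve: "((\<lambda>t. Phi t z) has_derivative (\<lambda>t. t *\<^sub>R Y z)) (at 0)"
    using Y_complete unfolding is_flow_def has_vector_derivative_def by metis
  have "((\<lambda>t. gfun (Phi t z)) has_derivative (\<lambda>t. Dgf (t *\<^sub>R Y z))) (at 0)"
    using has_derivative_compose[OF curve] hasg Y_complete unfolding is_flow_def by metis
  hence "((\<lambda>t. gfun (Phi t z)) has_vector_derivative Dgf (Y z)) (at 0)"
    unfolding has_vector_derivative_def using linDgf by (simp add: linear_scale)
  hence vf: "vf_level Phi gfun z = Dgf (Y z)"
    unfolding vf_level_def by (rule vector_derivative_at)
  show ?thesis
    unfolding gfun_def[abs_def, symmetric] vf Dgf_def dDY qz divl Du_def[symmetric]
    using q0 by (simp add: field_simps)
qed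

end
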